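(* Let $(X,\le)$ be a poset, $E$ an equivalence relation on $X$ with ${\le}\subseteq E$, and $\alpha:X\to X$ an order automorphism of $(X,\le)$ with $\alpha\subseteq E$. Set $0=\alpha\circ({\le}^c)^\smile=({\le}^c)^\smile\circ\alpha$. Then for all $R\in\mathsf{Up}(\mathbf E)$: (i) ${\sim}^nR=(\alpha^\smile)^{\frac{n-1}{2}}\circ(R^c)^\smile\circ\alpha^{\frac{n+1}{2}}$ for all odd $n\ge1$; (ii) ${\sim}^nR=(\alpha^\smile)^{\frac n2}\circ R\circ\alpha^{\frac n2}$ for all even $n\ge2$; (iii) $-^nR=\alpha^{\frac{n+1}{2}}\circ(R^c)^\smile\circ(\alpha^\smile)^{\frac{n-1}{2}}$ for all odd $n\ge1$; (iv) $-^nR=\alpha^{\frac n2}\circ R\circ(\alpha^\smile)^{\frac n2}$ for all even $n\ge2$.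
   Context: For binary relations: converse $R^\smile=\{(x,y)\mid(y,x)\in R\}$; composition $R\circ S=\{(x,y)\mid\exists z\,((x,z)\in R,(z,y)\in S)\}$; $R^0=\mathrm{id}_X$, $R^{k+1}=R^k\circ R$. A function $\alpha$ is identified with its graph. For a poset $(X,\le)$ and an equivalence relation $E\supseteq{\le}$, $E$ is partially ordered by $(u,v)\preceq(x,y)$ iff $x\le u$ and $v\le y$; $\mathbf E=(E,\preceq)$ and $\mathsf{Up}(\mathbf E)$ is its set of up-sets. For $R\subseteq E$, $R^c=E\setminus R$. On $\mathsf{Up}(\mathbf E)$ define $R\backslash S=(R^\smile\circ S^c)^c$, $R/S=(R^c\circ S^\smile)^c$, ${\sim}R=R\backslash 0$, $-R=0/R$; ${\sim}^n$, $-^n$ are $n$-fold applications. An order automorphism is a bijection $\alpha$ with $x\le y\iff\alpha(x)\le\alpha(y)$. *)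

theory Defs
  imports Main
begin

text \<open>Relations are sets of pairs on a carrier X; composition R o S is relcomp (R O S),
  converse is converse.\<close>

definition graph_on :: "'a set \<Rightarrow> ('a \<Rightarrow> 'a) \<Rightarrow> 'a rel" where
  "graph_on X f = {(x, f x) | x. x \<in> X}"

primrec rpow :: "'a set \<Rightarrow> 'a rel \<Rightarrow> nat \<Rightarrow> 'a rel" where
  "rpow X R 0 = Id_on X"
| "rpow X R (Suc k) = rpow X R k O R"

definition rcompl :: "'a rel \<Rightarrow> 'a rel \<Rightarrow> 'a rel" where
  "rcompl E R = E - R"

definition Eord :: "'a rel \<Rightarrow> 'a \<times> 'a \<Rightarrow> 'a \<times> 'a \<Rightarrow> bool" where
  "Eord le p q \<longleftrightarrow> (fst q, fst p) \<in> le \<and> (snd p, snd q) \<in> le"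

definition UpE :: "'a rel \<Rightarrow> 'a rel \<Rightarrow> 'a rel set" where
  "UpE le E = {R. R \<subseteq> E \<and> (\<forall>p\<in>R. \<forall>q\<in>E. Eord le p q \<longrightarrow> q \<in> R)}"

definition rres :: "'a rel \<Rightarrow> 'a rel \<Rightarrow> 'a rel \<Rightarrow> 'a rel" where
  "rres E R S = rcompl E (converse R O rcompl E S)"

definition lres :: "'a rel \<Rightarrow> 'a rel \<Rightarrow> 'a rel \<Rightarrow> 'a rel" where
  "lres E R S = rcompl E (rcompl E R O converse S)"

definition order_automorphism :: "'a set \<Rightarrow> 'a rel \<Rightarrow> ('a \<Rightarrow> 'a) \<Rightarrow> bool" where
  "order_automorphism X le f \<longleftrightarrow> bij_betw f X X \<and>
     (\<forall>x\<in>X. \<forall>y\<in>X. (x, y) \<in> le \<longleftrightarrow> (f x, f y) \<in> le)"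

end

theory Submission
  imports Defs
begin

lemma rpow_comm:
  assumes "R \<subseteq> X \<times> X"
  shows "rpow X R k O R = R O rpow X R k"
proof (induction k)
  case 0
  show ?case using assms by auto
next
  case (Suc k)
  have "rpow X R (Suc k) O R = (rpow X R k O R) O R" by simp
  also have "\<dots> = (R O rpow X R k) O R" using Suc by simp
  also have "\<dots> = R O rpow X R (Suc k)" by (simp add: O_assoc)
  finally show ?case .
qed

lemma Tpow:
  assumes "G \<subseteq> X \<times> X" "S \<subseteq> X \<times> X"
  shows "((\<lambda>S. converse G O S O G) ^^ k) S = rpow X (converse G) k O S O rpow X G k"
proof (induction k)
  case 0 show ?case using assms(2) by auto
next
  case (Suc k)
  have cG: "converse G \<subseteq> X \<times> X" using assms(1) by auto
  have "((\<lambda>S. converse G O S O G) ^^ Suc k) S = converse G O (rpow X (converse G) k O S O rpow X G k) O G"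
    using Suc by simp
  also have "\<dots> = (converse G O rpow X (converse G) k) O S O (rpow X G k O G)" by (simp add: O_assoc)
  also have "\<dots> = rpow X (converse G) (Suc k) O S O rpow X G (Suc k)"
    using rpow_comm[OF cG, of k] by simp
  finally show ?case .
qed

lemma Tpow2:
  assumes "G \<subseteq> X \<times> X" "S \<subseteq> X \<times> X"
  shows "((\<lambda>S. G O S O converse G) ^^ k) S = rpow X G k O S O rpow X (converse G) k"
proof (induction k)
  case 0 show ?case using assms(2) by auto
next
  case (Suc k)
  have "((\<lambda>S. G O S O converse G) ^^ Suc k) S = G O (rpow X G k O S O rpow X (converse G) k) O converse G"
    using Suc by simp
  also have "\<dots> = (G O rpow X G k) O S O (rpow X (converse G) k O converse G)" by (simp add: O_assoc)
  also have "\<dots> = rpow X G (Suc k) O S O rpow X (converse G) (Suc k)"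
    using rpow_comm[OF assms(1), of k] by simp
  finally show ?case .
qed

context
  fixes X :: "'a set" and le E :: "'a rel" and \<alpha> :: "'a \<Rightarrow> 'a"
  assumes po: "partial_order_on X le" and eq: "equiv X E" and leE: "le \<subseteq> E"
    and oa: "order_automorphism X le \<alpha>" and gE: "graph_on X \<alpha> \<subseteq> E"
begin

lemma E_sub: "E \<subseteq> X \<times> X" using eq by (auto simp: equiv_def refl_on_def)
lemma E_sym: "(x,y) \<in> E \<Longrightarrow> (y,x) \<in> E" using eq by (auto simp: equiv_def sym_def)
lemma E_trans: "(x,y) \<in> E \<Longrightarrow> (y,z) \<in> E \<Longrightarrow> (x,z) \<in> E" using eq by (auto simp: equiv_def trans_def)
lemma le_refl: "x \<in> X \<Longrightarrow> (x,x) \<in> le"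
  using po by (auto simp: partial_order_on_def preorder_on_def refl_on_def)
lemma aX: "x \<in> X \<Longrightarrow> \<alpha> x \<in> X" using oa by (auto simp: order_automorphism_def bij_betw_def)
lemma a_inj: "x \<in> X \<Longrightarrow> y \<in> X \<Longrightarrow> \<alpha> x = \<alpha> y \<Longrightarrow> x = y"
  using oa by (auto simp: order_automorphism_def bij_betw_def inj_on_def)
lemma a_surj: "y \<in> X \<Longrightarrow> \<exists>x\<in>X. y = \<alpha> x"
  using oa by (auto simp: order_automorphism_def bij_betw_def)
lemma a_le: "x \<in> X \<Longrightarrow> y \<in> X \<Longrightarrow> (\<alpha> x, \<alpha> y) \<in> le \<longleftrightarrow> (x,y) \<in> le"
  using oa by (auto simp: order_automorphism_def)
lemma G_mem: "(x,y) \<in> graph_on X \<alpha> \<longleftrightarrow> x \<in> X \<and> y = \<alpha> x"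
  by (auto simp: graph_on_def)
lemma aE: "x \<in> X \<Longrightarrow> (x, \<alpha> x) \<in> E" using gE G_mem by blast
lemma G_sub: "graph_on X \<alpha> \<subseteq> X \<times> X" using aX by (auto simp: graph_on_def)

lemma up: "S \<in> UpE le E \<Longrightarrow> p \<in> S \<Longrightarrow> q \<in> E \<Longrightarrow> Eord le p q \<Longrightarrow> q \<in> S"
  by (auto simp: UpE_def)
lemma upsub: "S \<in> UpE le E \<Longrightarrow> S \<subseteq> E" by (auto simp: UpE_def)

lemma Z_mem: "(x,y) \<in> graph_on X \<alpha> O converse (rcompl E le) \<longleftrightarrow>
   x \<in> X \<and> (y, \<alpha> x) \<in> E \<and> (y, \<alpha> x) \<notin> le"
  by (auto simp: graph_on_def rcompl_def)

lemma rres_eq: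
  assumes S: "S \<in> UpE le E"
  shows "rres E S (graph_on X \<alpha> O converse (rcompl E le)) = converse (rcompl E S) O graph_on X \<alpha>"
proof (intro set_eqI iffI)
  fix p assume p: "p \<in> rres E S (graph_on X \<alpha> O converse (rcompl E le))"
  obtain x y where xy: "p = (x,y)" by force
  have xyE: "(x,y) \<in> E" and nz: "\<And>z. (z,x) \<in> S \<Longrightarrow> (z,y) \<in> E \<Longrightarrow> (z,y) \<in> graph_on X \<alpha> O converse (rcompl E le)"
    using p xy by (auto simp: rres_def rcompl_def)
  have yX: "y \<in> X" using xyE E_sub by auto
  obtain w where w: "w \<in> X" "y = \<alpha> w" using a_surj[OF yX] by auto
  have wx: "(w,x) \<in> E" using aE[OF w(1)] w xyE E_sym E_trans by metis
  have "(w,x) \<notin> S"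
  proof
    assume "(w,x) \<in> S"
    moreover have "(w,y) \<in> E" using aE[OF w(1)] w by simp
    ultimately have "(w,y) \<in> graph_on X \<alpha> O converse (rcompl E le)" using nz by blast
    then have "(y, \<alpha> w) \<notin> le" using Z_mem by blast
    then show False using w le_refl yX by simp
  qed
  then show "p \<in> converse (rcompl E S) O graph_on X \<alpha>"
    using xy wx w by (auto simp: rcompl_def graph_on_def)
next
  fix p assume p: "p \<in> converse (rcompl E S) O graph_on X \<alpha>"
  then obtain x y w where xy: "p = (x,y)" and wx: "(w,x) \<in> E" "(w,x) \<notin> S" and w: "w \<in> X" "y = \<alpha> w"
    by (auto simp: rcompl_def graph_on_def)
  have xX: "x \<in> X" using wx E_sub by auto
  have xyE: "(x,y) \<in> E" using aE[OF w(1)] w wx E_sym E_trans by metis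
  have "(z,y) \<in> graph_on X \<alpha> O converse (rcompl E le)" if z: "(z,x) \<in> S" "(z,y) \<in> E" for z
  proof -
    have zX: "z \<in> X" using z E_sub by auto
    have "(y, \<alpha> z) \<in> E" using z(2) aE[OF zX] E_sym E_trans by metis
    moreover have "(y, \<alpha> z) \<notin> le"
    proof
      assume "(y, \<alpha> z) \<in> le"
      then have "(w,z) \<in> le" using w a_le zX by simp
      then have "Eord le (z,x) (w,x)" using le_refl xX by (simp add: Eord_def)
      then have "(w,x) \<in> S" using up[OF S z(1)] wx by blast
      then show False using wx by simp
    qed
    ultimately show ?thesis using Z_mem zX by blast
  qed
  then show "p \<in> rres E S (graph_on X \<alpha> O converse (rcompl E le))"
    using xy xyE by (auto simp: rres_def rcompl_def)
qed


lemma rres_up: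
  assumes S: "S \<in> UpE le E"
  shows "converse (rcompl E S) O graph_on X \<alpha> \<in> UpE le E"
proof -
  have "q \<in> converse (rcompl E S) O graph_on X \<alpha>"
    if p: "p \<in> converse (rcompl E S) O graph_on X \<alpha>" and q: "q \<in> E" and o: "Eord le p q" for p q
  proof -
    obtain x y w where xy: "p = (x,y)" and wx: "(w,x) \<in> E" "(w,x) \<notin> S" and w: "w \<in> X" "y = \<alpha> w"
      using p by (auto simp: rcompl_def graph_on_def)
    obtain x' y' where q': "q = (x',y')" by force
    have l: "(x',x) \<in> le" "(y,y') \<in> le" using o xy q' by (auto simp: Eord_def)
    have y'X: "y' \<in> X" using q q' E_sub by auto
    obtain w' where w': "w' \<in> X" "y' = \<alpha> w'" using a_surj[OF y'X] by auto
    have ww: "(w,w') \<in> le" using l(2) w w' a_le by simp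
    have "(w',x') \<in> E" using aE[OF w'(1)] w' q q' E_sym E_trans by metis
    moreover have "(w',x') \<notin> S"
    proof
      assume "(w',x') \<in> S"
      moreover have "Eord le (w',x') (w,x)" using ww l by (simp add: Eord_def)
      ultimately show False using up[OF S] wx by blast
    qed
    ultimately show ?thesis using q' w' by (auto simp: rcompl_def graph_on_def)
  qed
  moreover have "converse (rcompl E S) O graph_on X \<alpha> \<subseteq> E"
  proof
    fix p assume "p \<in> converse (rcompl E S) O graph_on X \<alpha>"
    then obtain x w where "p = (x, \<alpha> w)" "(w,x) \<in> E" "w \<in> X" by (auto simp: rcompl_def G_mem)
    then show "p \<in> E" using aE E_sym E_trans by metis
  qed
  ultimately show ?thesis by (auto simp: UpE_def)
qed

lemma rres_double:
  assumes S: "S \<in> UpE le E"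
  shows "converse (rcompl E (converse (rcompl E S) O graph_on X \<alpha>)) O graph_on X \<alpha>
     = converse (graph_on X \<alpha>) O S O graph_on X \<alpha>"
proof (intro set_eqI iffI)
  fix p assume p: "p \<in> converse (rcompl E (converse (rcompl E S) O graph_on X \<alpha>)) O graph_on X \<alpha>"
  then obtain x y w where xy: "p = (x,y)" and w: "w \<in> X" "y = \<alpha> w"
    and wq: "(w,x) \<in> rcompl E (converse (rcompl E S) O graph_on X \<alpha>)"
    by (auto simp: G_mem)
  have wx: "(w,x) \<in> E" using wq by (simp add: rcompl_def)
  have n: "(v,w) \<in> S" if "v \<in> X" "x = \<alpha> v" "(v,w) \<in> E" for v
  proof (rule ccontr)
    assume "(v,w) \<notin> S"
    then have "(w,x) \<in> converse (rcompl E S) O graph_on X \<alpha>" using that by (auto simp: rcompl_def G_mem)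
    then show False using wq by (simp add: rcompl_def)
  qed
  have xX: "x \<in> X" using wx E_sub by auto
  obtain v where v: "v \<in> X" "x = \<alpha> v" using a_surj[OF xX] by auto
  have "(v,w) \<in> E" using aE[OF v(1)] v wx E_sym E_trans by metis
  then have "(v,w) \<in> S" using n v by blast
  then show "p \<in> converse (graph_on X \<alpha>) O S O graph_on X \<alpha>"
    using xy v w by (auto simp: graph_on_def)
next
  fix p assume p: "p \<in> converse (graph_on X \<alpha>) O S O graph_on X \<alpha>"
  then obtain a b where ab: "p = (\<alpha> a, \<alpha> b)" "a \<in> X" "b \<in> X" "(a,b) \<in> S"
    by (auto simp: graph_on_def)
  have abE: "(a,b) \<in> E" using ab upsub[OF S] by auto
  have bx: "(b, \<alpha> a) \<in> E" using abE aE[OF ab(2)] E_sym E_trans by metis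
  have "(b, \<alpha> a) \<notin> converse (rcompl E S) O graph_on X \<alpha>"
  proof
    assume "(b, \<alpha> a) \<in> converse (rcompl E S) O graph_on X \<alpha>"
    then obtain v where "v \<in> X" "\<alpha> a = \<alpha> v" "(v,b) \<notin> S" by (auto simp: rcompl_def graph_on_def)
    then show False using a_inj ab by metis
  qed
  then show "p \<in> converse (rcompl E (converse (rcompl E S) O graph_on X \<alpha>)) O graph_on X \<alpha>"
    using ab bx by (auto simp: rcompl_def graph_on_def)
qed

lemma lres_eq:
  assumes S: "S \<in> UpE le E"
  shows "lres E (graph_on X \<alpha> O converse (rcompl E le)) S = graph_on X \<alpha> O converse (rcompl E S)"
proof (intro set_eqI iffI)
  fix p assume p: "p \<in> lres E (graph_on X \<alpha> O converse (rcompl E le)) S"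
  obtain x y where xy: "p = (x,y)" by force
  have xyE: "(x,y) \<in> E" and nz: "\<And>z. (x,z) \<in> E \<Longrightarrow> (y,z) \<in> S \<Longrightarrow> (x,z) \<in> graph_on X \<alpha> O converse (rcompl E le)"
    using p xy by (auto simp: lres_def rcompl_def)
  have xX: "x \<in> X" using xyE E_sub by auto
  have yE: "(y, \<alpha> x) \<in> E" using xyE aE[OF xX] E_sym E_trans by metis
  have "(y, \<alpha> x) \<notin> S"
  proof
    assume "(y, \<alpha> x) \<in> S"
    then have "(x, \<alpha> x) \<in> graph_on X \<alpha> O converse (rcompl E le)" using nz aE[OF xX] by blast
    then show False using Z_mem le_refl aX xX by blast
  qed
  then show "p \<in> graph_on X \<alpha> O converse (rcompl E S)"
    using xy xX yE by (auto simp: rcompl_def graph_on_def)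
next
  fix p assume p: "p \<in> graph_on X \<alpha> O converse (rcompl E S)"
  then obtain x y where xy: "p = (x,y)" and xX: "x \<in> X" and yE: "(y, \<alpha> x) \<in> E" "(y, \<alpha> x) \<notin> S"
    by (auto simp: rcompl_def graph_on_def)
  have xyE: "(x,y) \<in> E" using aE[OF xX] yE E_sym E_trans by metis
  have yX: "y \<in> X" using yE E_sub by auto
  have "(x,z) \<in> graph_on X \<alpha> O converse (rcompl E le)" if z: "(x,z) \<in> E" "(y,z) \<in> S" for z
  proof -
    have zX: "z \<in> X" using z E_sub by auto
    have "(z, \<alpha> x) \<in> E" using z(1) aE[OF xX] E_sym E_trans by metis
    moreover have "(z, \<alpha> x) \<notin> le"
    proof
      assume "(z, \<alpha> x) \<in> le"
      then have "Eord le (y,z) (y, \<alpha> x)" using le_refl yX by (simp add: Eord_def)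
      then show False using up[OF S z(2)] yE by blast
    qed
    ultimately show ?thesis using Z_mem xX by blast
  qed
  then show "p \<in> lres E (graph_on X \<alpha> O converse (rcompl E le)) S"
    using xy xyE by (auto simp: lres_def rcompl_def)
qed

lemma lres_up:
  assumes S: "S \<in> UpE le E"
  shows "graph_on X \<alpha> O converse (rcompl E S) \<in> UpE le E"
proof -
  have "q \<in> graph_on X \<alpha> O converse (rcompl E S)"
    if p: "p \<in> graph_on X \<alpha> O converse (rcompl E S)" and q: "q \<in> E" and o: "Eord le p q" for p q
  proof -
    obtain x y where xy: "p = (x,y)" and xX: "x \<in> X" and yE: "(y, \<alpha> x) \<in> E" "(y, \<alpha> x) \<notin> S"
      using p by (auto simp: rcompl_def graph_on_def)
    obtain x' y' where q': "q = (x',y')" by force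
    have l: "(x',x) \<in> le" "(y,y') \<in> le" using o xy q' by (auto simp: Eord_def)
    have x'X: "x' \<in> X" using q q' E_sub by auto
    have ax: "(\<alpha> x', \<alpha> x) \<in> le" using l(1) a_le xX x'X by simp
    have "(y', \<alpha> x') \<in> E" using aE[OF x'X] q q' E_sym E_trans by metis
    moreover have "(y', \<alpha> x') \<notin> S"
    proof
      assume "(y', \<alpha> x') \<in> S"
      moreover have "Eord le (y', \<alpha> x') (y, \<alpha> x)" using ax l by (simp add: Eord_def)
      ultimately show False using up[OF S] yE by blast
    qed
    ultimately show ?thesis using q' x'X by (auto simp: rcompl_def graph_on_def)
  qed
  moreover have "graph_on X \<alpha> O converse (rcompl E S) \<subseteq> E"
  proof
    fix p assume "p \<in> graph_on X \<alpha> O converse (rcompl E S)"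
    then obtain x y where "p = (x, y)" "(y, \<alpha> x) \<in> E" "x \<in> X" by (auto simp: rcompl_def G_mem)
    then show "p \<in> E" using aE E_sym E_trans by metis
  qed
  ultimately show ?thesis by (auto simp: UpE_def)
qed

lemma lres_double:
  assumes S: "S \<in> UpE le E"
  shows "graph_on X \<alpha> O converse (rcompl E (graph_on X \<alpha> O converse (rcompl E S)))
     = graph_on X \<alpha> O S O converse (graph_on X \<alpha>)"
proof (intro set_eqI iffI)
  fix p assume p: "p \<in> graph_on X \<alpha> O converse (rcompl E (graph_on X \<alpha> O converse (rcompl E S)))"
  then obtain x y where xy: "p = (x,y)" and xX: "x \<in> X"
    and yq: "(y, \<alpha> x) \<in> rcompl E (graph_on X \<alpha> O converse (rcompl E S))"
    by (auto simp: G_mem)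
  have yE: "(y, \<alpha> x) \<in> E" and n: "(y, \<alpha> x) \<notin> graph_on X \<alpha> O converse (rcompl E S)"
    using yq by (auto simp: rcompl_def)
  have yX: "y \<in> X" using yE E_sub by auto
  have "(\<alpha> x, \<alpha> y) \<in> E" using yE aE[OF yX] E_sym E_trans by metis
  then have "(\<alpha> x, \<alpha> y) \<in> S" using n yX by (auto simp: rcompl_def graph_on_def)
  then show "p \<in> graph_on X \<alpha> O S O converse (graph_on X \<alpha>)"
    using xy xX yX by (auto simp: graph_on_def)
next
  fix p assume p: "p \<in> graph_on X \<alpha> O S O converse (graph_on X \<alpha>)"
  then obtain x y where xy: "p = (x,y)" "x \<in> X" "y \<in> X" "(\<alpha> x, \<alpha> y) \<in> S"
    by (auto simp: graph_on_def)
  have sE: "(\<alpha> x, \<alpha> y) \<in> E" using xy upsub[OF S] by auto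
  have yE: "(y, \<alpha> x) \<in> E" using sE aE[OF xy(3)] E_sym E_trans by metis
  have "(y, \<alpha> x) \<notin> graph_on X \<alpha> O converse (rcompl E S)"
    using xy by (auto simp: rcompl_def graph_on_def)
  then show "p \<in> graph_on X \<alpha> O converse (rcompl E (graph_on X \<alpha> O converse (rcompl E S)))"
    using xy yE by (auto simp: rcompl_def graph_on_def)
qed


lemma upX: "S \<in> UpE le E \<Longrightarrow> S \<subseteq> X \<times> X" using upsub E_sub by blast

lemma F_up:
  assumes R: "R \<in> UpE le E"
  shows "((\<lambda>S. rres E S (graph_on X \<alpha> O converse (rcompl E le))) ^^ n) R \<in> UpE le E"
  by (induction n) (auto simp: R rres_eq rres_up)

lemma F_even:
  assumes R: "R \<in> UpE le E"
  shows "((\<lambda>S. rres E S (graph_on X \<alpha> O converse (rcompl E le))) ^^ (2*k)) R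
    = ((\<lambda>S. converse (graph_on X \<alpha>) O S O graph_on X \<alpha>) ^^ k) R"
proof (induction k)
  case 0 show ?case by simp
next
  case (Suc k)
  let ?F = "\<lambda>S. rres E S (graph_on X \<alpha> O converse (rcompl E le))"
  have "(?F ^^ (2 * Suc k)) R = ?F (?F ((?F ^^ (2*k)) R))"
  proof -
    have e: "2 * Suc k = Suc (Suc (2*k))" by simp
    show ?thesis by (simp only: e funpow.simps comp_apply)
  qed
  also have "\<dots> = converse (graph_on X \<alpha>) O (?F ^^ (2*k)) R O graph_on X \<alpha>"
    using F_up[OF R, of "2*k"] by (simp add: rres_eq rres_up rres_double)
  finally show ?case using Suc by simp
qed

lemma L_up:
  assumes R: "R \<in> UpE le E"
  shows "((\<lambda>S. lres E (graph_on X \<alpha> O converse (rcompl E le)) S) ^^ n) R \<in> UpE le E"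
  by (induction n) (auto simp: R lres_eq lres_up)

lemma L_even:
  assumes R: "R \<in> UpE le E"
  shows "((\<lambda>S. lres E (graph_on X \<alpha> O converse (rcompl E le)) S) ^^ (2*k)) R
    = ((\<lambda>S. graph_on X \<alpha> O S O converse (graph_on X \<alpha>)) ^^ k) R"
proof (induction k)
  case 0 show ?case by simp
next
  case (Suc k)
  let ?F = "\<lambda>S. lres E (graph_on X \<alpha> O converse (rcompl E le)) S"
  have "(?F ^^ (2 * Suc k)) R = ?F (?F ((?F ^^ (2*k)) R))"
  proof -
    have e: "2 * Suc k = Suc (Suc (2*k))" by simp
    show ?thesis by (simp only: e funpow.simps comp_apply)
  qed
  also have "\<dots> = graph_on X \<alpha> O (?F ^^ (2*k)) R O converse (graph_on X \<alpha>)"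
    using L_up[OF R, of "2*k"] by (simp add: lres_eq lres_up lres_double)
  finally show ?case using Suc by simp
qed

end

theorem lemma3p11:
  fixes X :: "'a set" and le E :: "'a rel" and \<alpha> :: "'a \<Rightarrow> 'a" and Z :: "'a rel"
  assumes "partial_order_on X le"
    and "equiv X E"
    and "le \<subseteq> E"
    and "order_automorphism X le \<alpha>"
    and "graph_on X \<alpha> \<subseteq> E"
    and Z_def: "Z = graph_on X \<alpha> O converse (rcompl E le)"
  shows "\<forall>R \<in> UpE le E.
     (\<forall>n. odd n \<longrightarrow> ((\<lambda>S. rres E S Z) ^^ n) R =
        rpow X (converse (graph_on X \<alpha>)) ((n - 1) div 2) O converse (rcompl E R)
          O rpow X (graph_on X \<alpha>) ((n + 1) div 2))
   \<and> (\<forall>n. even n \<and> n \<ge> 2 \<longrightarrow> ((\<lambda>S. rres E S Z) ^^ n) R =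
        rpow X (converse (graph_on X \<alpha>)) (n div 2) O R O rpow X (graph_on X \<alpha>) (n div 2))
   \<and> (\<forall>n. odd n \<longrightarrow> ((\<lambda>S. lres E Z S) ^^ n) R =
        rpow X (graph_on X \<alpha>) ((n + 1) div 2) O converse (rcompl E R)
          O rpow X (converse (graph_on X \<alpha>)) ((n - 1) div 2))
   \<and> (\<forall>n. even n \<and> n \<ge> 2 \<longrightarrow> ((\<lambda>S. lres E Z S) ^^ n) R =
        rpow X (graph_on X \<alpha>) (n div 2) O R O rpow X (converse (graph_on X \<alpha>)) (n div 2))"
proof (intro ballI conjI allI impI)
  fix R assume R: "R \<in> UpE le E"
  note A = assms(1-5)
  let ?G = "graph_on X \<alpha>"
  let ?F = "\<lambda>S. rres E S Z"
  let ?L = "\<lambda>S. lres E Z S"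
  have GX: "?G \<subseteq> X \<times> X" using G_sub[OF A] .
  have RX: "R \<subseteq> X \<times> X" using upX[OF A R] .
  have FR: "?F R = converse (rcompl E R) O ?G" using rres_eq[OF A R] Z_def by simp
  have LR: "?L R = ?G O converse (rcompl E R)" using lres_eq[OF A R] Z_def by simp
  have FRX: "converse (rcompl E R) O ?G \<subseteq> X \<times> X" using upX[OF A rres_up[OF A R]] .
  have LRX: "?G O converse (rcompl E R) \<subseteq> X \<times> X" using upX[OF A lres_up[OF A R]] .
  have Fev: "(?F ^^ (2*k)) S = ((\<lambda>S. converse ?G O S O ?G) ^^ k) S" if "S \<in> UpE le E" for k S
    using F_even[OF A that, of k] Z_def by simp
  have Lev: "(?L ^^ (2*k)) S = ((\<lambda>S. ?G O S O converse ?G) ^^ k) S" if "S \<in> UpE le E" for k S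
    using L_even[OF A that, of k] Z_def by simp
  have FRU: "?F R \<in> UpE le E" using rres_up[OF A R] FR by simp
  have LRU: "?L R \<in> UpE le E" using lres_up[OF A R] LR by simp
  {
    fix n :: nat assume "odd n"
    then obtain k where n: "n = Suc (2*k)" using oddE by fastforce
    have "(?F ^^ n) R = (?F ^^ (2*k)) (?F R)" by (simp only: n funpow_Suc_right comp_apply)
    also have "\<dots> = rpow X (converse ?G) k O (converse (rcompl E R) O ?G) O rpow X ?G k"
      using Fev[OF FRU, of k] Tpow[OF GX FRX, of k] FR by simp
    also have "\<dots> = rpow X (converse ?G) k O converse (rcompl E R) O (?G O rpow X ?G k)"
      by (simp add: O_assoc)
    also have "\<dots> = rpow X (converse ?G) k O converse (rcompl E R) O rpow X ?G (Suc k)"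
      using rpow_comm[OF GX, of k] by simp
    finally show "(?F ^^ n) R = rpow X (converse ?G) ((n - 1) div 2) O converse (rcompl E R)
          O rpow X ?G ((n + 1) div 2)" using n by simp
  next
    fix n :: nat assume "odd n"
    then obtain k where n: "n = Suc (2*k)" using oddE by fastforce
    have "(?L ^^ n) R = (?L ^^ (2*k)) (?L R)" by (simp only: n funpow_Suc_right comp_apply)
    also have "\<dots> = rpow X ?G k O (?G O converse (rcompl E R)) O rpow X (converse ?G) k"
      using Lev[OF LRU, of k] Tpow2[OF GX LRX, of k] LR by simp
    also have "\<dots> = rpow X ?G (Suc k) O converse (rcompl E R) O rpow X (converse ?G) k"
      by (simp add: O_assoc)
    finally show "(?L ^^ n) R = rpow X ?G ((n + 1) div 2) O converse (rcompl E R)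
          O rpow X (converse ?G) ((n - 1) div 2)" using n by simp
  }
  {
    fix n :: nat assume "even n \<and> n \<ge> 2"
    then obtain k where n: "n = 2*k" by blast
    show "(?F ^^ n) R = rpow X (converse ?G) (n div 2) O R O rpow X ?G (n div 2)"
      using Fev[OF R, of k] Tpow[OF GX RX, of k] n by simp
    show "(?L ^^ n) R = rpow X ?G (n div 2) O R O rpow X (converse ?G) (n div 2)"
      using Lev[OF R, of k] Tpow2[OF GX RX, of k] n by simp
  }
qed

end
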